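(* Let $\mathrm{Spin}(7)$ act on the unit sphere $S^7\subset\mathbb{O}$ by $(A,B,B)\cdot x=B(x)$, so that $S^7=\mathrm{Spin}(7)/G_2$ with $G_2$ the isotropy group of $1$. Let $F$ be a $\mathrm{Spin}(7)$-invariant Finsler metric on $S^7$. If some nonzero $X\in\mathrm{Lie}(\mathrm{Spin}(7))$ generates a Killing vector field of constant length for $F$, then $F$ is a symmetric Riemannian metric; more precisely, $F$ is a positive constant multiple of the standard round Riemannian metric on $S^7$.
   Context: $\mathbb{O}$ denotes the Cayley numbers, $\mathbb{O}=\mathbb{H}\oplus\mathbb{H}$ with product $(q_1,q_2)(s_1,s_2)=(q_1s_1-\overline{s_2}q_2,\ s_2q_1+q_2\overline{s_1})$, conjugation $\overline{(q_1,q_2)}=(\overline{q_1},-q_2)$ and inner product $\langle x,y\rangle=\mathrm{Re}(\overline{x}y)$, $\mathrm{Re}(q_1,q_2)=\mathrm{Re}(q_1)$. A triality triple is $(A,B,C)\in\mathrm{SO}(8)^3$ with $A(x)B(y)=C(xy)$ for all $x,y$; these form $\mathrm{Spin}(8)$. $\mathrm{Spin}(7)$ is the subgroup of triples with $B=C$ (equivalently $A(1)=1$), and $G_2$ the subgroup with $A=B=C$ (automorphisms of $\mathbb{O}$). A Killing vector field of constant length is a Killing field $X$ with $F(X_p)$ independent of $p$. Finsler metric: continuous $F:TM\to[0,\infty)$, smooth off the zero section, positive, positively $1$-homogeneous, with positive definite fiberwise Hessian of $F^2/2$. *)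

theory Defs
  imports "HOL-Analysis.Analysis"
begin

definition qmul :: "real^4 \<Rightarrow> real^4 \<Rightarrow> real^4" where
  "qmul p q = vector
     [p$1*q$1 - p$2*q$2 - p$3*q$3 - p$4*q$4,
      p$1*q$2 + p$2*q$1 + p$3*q$4 - p$4*q$3,
      p$1*q$3 - p$2*q$4 + p$3*q$1 + p$4*q$2,
      p$1*q$4 + p$2*q$3 - p$3*q$2 + p$4*q$1]"

definition qconj :: "real^4 \<Rightarrow> real^4" where
  "qconj q = vector [q$1, - q$2, - q$3, - q$4]"

text \<open>O = H \<oplus> H, stored as real^8: coordinates 1..4 are q1, coordinates 5..8 are q2.\<close>

definition ofst :: "real^8 \<Rightarrow> real^4" where
  "ofst x = vector [x$1, x$2, x$3, x$4]"

definition osnd :: "real^8 \<Rightarrow> real^4" where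
  "osnd x = vector [x$5, x$6, x$7, x$8]"

definition ojoin :: "real^4 \<Rightarrow> real^4 \<Rightarrow> real^8" where
  "ojoin q r = vector [q$1, q$2, q$3, q$4, r$1, r$2, r$3, r$4]"

text \<open>(q1,q2)(s1,s2) = (q1 s1 - conj(s2) q2, s2 q1 + q2 conj(s1)).
  The inner product Re(conj x y) is the standard inner product of real^8.\<close>
definition omul :: "real^8 \<Rightarrow> real^8 \<Rightarrow> real^8" where
  "omul x y = ojoin (qmul (ofst x) (ofst y) - qmul (qconj (osnd y)) (osnd x))
                    (qmul (osnd y) (ofst x) + qmul (osnd x) (qconj (ofst y)))"

definition SO8 :: "(real^8 \<Rightarrow> real^8) set" where
  "SO8 = {A. orthogonal_transformation A \<and> det (matrix A) = 1}"

type_synonym triple = "(real^8 \<Rightarrow> real^8) \<times> (real^8 \<Rightarrow> real^8) \<times> (real^8 \<Rightarrow> real^8)"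

definition Spin8 :: "triple set" where
  "Spin8 = {(A,B,C). A \<in> SO8 \<and> B \<in> SO8 \<and> C \<in> SO8 \<and>
                      (\<forall>x y. omul (A x) (B y) = C (omul x y))}"

definition Spin7 :: "triple set" where
  "Spin7 = {(A,B,C). (A,B,C) \<in> Spin8 \<and> B = C}"

definition spin7_act :: "triple \<Rightarrow> real^8 \<Rightarrow> real^8" where
  "spin7_act g x = fst (snd g) x"

definition tcomp :: "triple \<Rightarrow> triple \<Rightarrow> triple" where
  "tcomp g h = (case g of (A,B,C) \<Rightarrow> case h of (A',B',C') \<Rightarrow> (A \<circ> A', B \<circ> B', C \<circ> C'))"

definition Lie_Spin7 :: "triple set" where
  "Lie_Spin7 = {(XA,XB,XC). \<exists>\<phi> :: real \<Rightarrow> triple.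
      (\<forall>t. \<phi> t \<in> Spin7) \<and> \<phi> 0 = (id, id, id) \<and>
      (\<forall>s t. \<phi> (s + t) = tcomp (\<phi> s) (\<phi> t)) \<and>
      (\<forall>v. ((\<lambda>t. fst (\<phi> t) v) has_vector_derivative XA v) (at 0)) \<and>
      (\<forall>v. ((\<lambda>t. fst (snd (\<phi> t)) v) has_vector_derivative XB v) (at 0)) \<and>
      (\<forall>v. ((\<lambda>t. snd (snd (\<phi> t)) v) has_vector_derivative XC v) (at 0))}"

text \<open>The vector field on S^7 generated by X: p |-> d/dt|0 (exp(tX) . p) = XB p.\<close>
definition fundamental_field :: "triple \<Rightarrow> real^8 \<Rightarrow> real^8" where
  "fundamental_field X p = fst (snd X) p"

definition S7 :: "(real^8) set" where
  "S7 = {p. norm p = 1}"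

definition TS7 :: "((real^8) \<times> (real^8)) set" where
  "TS7 = {(p,v). p \<in> S7 \<and> inner p v = 0}"

definition TS7_nz :: "((real^8) \<times> (real^8)) set" where
  "TS7_nz = {(p,v). (p,v) \<in> TS7 \<and> v \<noteq> 0}"

fun Ck_on :: "nat \<Rightarrow> 'a::euclidean_space set \<Rightarrow> ('a \<Rightarrow> real) \<Rightarrow> bool" where
  "Ck_on 0 U f = continuous_on U f"
| "Ck_on (Suc k) U f = (f differentiable_on U \<and>
      (\<forall>v. Ck_on k U (\<lambda>x. frechet_derivative f (at x) v)))"

definition Cinf_on :: "'a::euclidean_space set \<Rightarrow> ('a \<Rightarrow> real) \<Rightarrow> bool" where
  "Cinf_on U f = (\<forall>k. Ck_on k U f)"

text \<open>Finsler metric on S^7 (F p v = F(v) for v in T_p S^7). Smoothness off the zero section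
  of the embedded submanifold TS^7 \<subseteq> R^8 x R^8 means: F is the restriction of a C^\<infinity>
  function on an open neighbourhood. Positive definiteness of the fibrewise Hessian of F^2/2
  at v is expressed through its quadratic form w |-> d^2/dt^2|0 F(p,v+tw)^2/2 on T_p S^7.\<close>
definition finsler_S7 :: "(real^8 \<Rightarrow> real^8 \<Rightarrow> real) \<Rightarrow> bool" where
  "finsler_S7 F \<longleftrightarrow>
     continuous_on TS7 (\<lambda>(p,v). F p v) \<and>
     (\<forall>(p,v)\<in>TS7. F p v \<ge> 0) \<and>
     (\<exists>U G. open U \<and> TS7_nz \<subseteq> U \<and> Cinf_on U G \<and> (\<forall>(p,v)\<in>TS7_nz. G (p,v) = F p v)) \<and>
     (\<forall>(p,v)\<in>TS7_nz. F p v > 0) \<and>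
     (\<forall>(p,v)\<in>TS7. \<forall>r>0. F p (r *\<^sub>R v) = r * F p v) \<and>
     (\<forall>(p,v)\<in>TS7_nz. \<forall>w. (p,w) \<in> TS7 \<and> w \<noteq> 0 \<longrightarrow>
         deriv (deriv (\<lambda>t. (F p (v + t *\<^sub>R w))\<^sup>2 / 2)) 0 > 0)"

definition spin7_invariant :: "(real^8 \<Rightarrow> real^8 \<Rightarrow> real) \<Rightarrow> bool" where
  "spin7_invariant F \<longleftrightarrow>
     (\<forall>g\<in>Spin7. \<forall>(p,v)\<in>TS7. F (spin7_act g p) (spin7_act g v) = F p v)"

definition killing_const_length ::
    "(real^8 \<Rightarrow> real^8 \<Rightarrow> real) \<Rightarrow> (real^8 \<Rightarrow> real^8) \<Rightarrow> bool" where
  "killing_const_length F K \<longleftrightarrow> (\<exists>c. \<forall>p\<in>S7. F p (K p) = c)"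

end

theory Submission
  imports Defs
begin


lemma exhaust_8: fixes x :: 8 shows "x = 1 \<or> x = 2 \<or> x = 3 \<or> x = 4 \<or> x = 5 \<or> x = 6 \<or> x = 7 \<or> x = 8"
proof (induct x)
  case (of_int z)
  then have "z = 0 \<or> z = 1 \<or> z = 2 \<or> z = 3 \<or> z = 4 \<or> z = 5 \<or> z = 6 \<or> z = 7" by fastforce
  then show ?case by auto
qed

lemma forall_8: "(\<forall>i::8. P i) \<longleftrightarrow> P 1 \<and> P 2 \<and> P 3 \<and> P 4 \<and> P 5 \<and> P 6 \<and> P 7 \<and> P 8"
  by (metis exhaust_8)

lemma UNIV_8: "UNIV = {1, 2, 3, 4, 5, 6, 7, 8::8}"
  using exhaust_8 by auto

lemma sum_8: "sum f (UNIV::8 set) = f 1 + f 2 + f 3 + f 4 + f 5 + f 6 + f 7 + f 8"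
  unfolding UNIV_8 by (simp add: ac_simps)

lemma vector_4 [simp]:
 "(vector [a,b,c,d] ::('a::zero)^4)$1 = a"
 "(vector [a,b,c,d] ::('a::zero)^4)$2 = b"
 "(vector [a,b,c,d] ::('a::zero)^4)$3 = c"
 "(vector [a,b,c,d] ::('a::zero)^4)$4 = d"
  unfolding vector_def by simp_all

lemma vector_8 [simp]:
 "(vector [a,b,c,d,e,f,g,h] ::('a::zero)^8)$1 = a"
 "(vector [a,b,c,d,e,f,g,h] ::('a::zero)^8)$2 = b"
 "(vector [a,b,c,d,e,f,g,h] ::('a::zero)^8)$3 = c"
 "(vector [a,b,c,d,e,f,g,h] ::('a::zero)^8)$4 = d"
 "(vector [a,b,c,d,e,f,g,h] ::('a::zero)^8)$5 = e"
 "(vector [a,b,c,d,e,f,g,h] ::('a::zero)^8)$6 = f"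
 "(vector [a,b,c,d,e,f,g,h] ::('a::zero)^8)$7 = g"
 "(vector [a,b,c,d,e,f,g,h] ::('a::zero)^8)$8 = h"
  unfolding vector_def by simp_all

lemma inner8: "inner (x::real^8) y = x$1*y$1 + x$2*y$2 + x$3*y$3 + x$4*y$4 + x$5*y$5 + x$6*y$6 + x$7*y$7 + x$8*y$8"
  by (simp add: inner_vec_def sum_8)

lemma vec8_eq: "(x::real^8) = y \<longleftrightarrow> x$1 = y$1 \<and> x$2 = y$2 \<and> x$3 = y$3 \<and> x$4 = y$4 \<and> x$5 = y$5 \<and> x$6 = y$6 \<and> x$7 = y$7 \<and> x$8 = y$8"
  by (simp add: vec_eq_iff forall_8)

lemma omul_c:
  "omul x y $ 1 = x$1*y$1 - x$2*y$2 - x$3*y$3 - x$4*y$4 - (y$5*x$5 + y$6*x$6 + y$7*x$7 + y$8*x$8)"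
  unfolding omul_def ojoin_def qmul_def qconj_def ofst_def osnd_def by simp

lemmas odefs = omul_def ojoin_def qmul_def qconj_def ofst_def osnd_def

abbreviation e1 :: "real^8" where "e1 \<equiv> axis 1 1"

lemma e1c: "e1$1 = 1" "e1$2 = 0" "e1$3 = 0" "e1$4 = 0" "e1$5 = 0" "e1$6 = 0" "e1$7 = 0" "e1$8 = 0"
  by (simp_all add: axis_def)

lemma lalt: "omul a (omul b y) + omul b (omul a y) = omul (omul a b + omul b a) y"
  unfolding vec8_eq by (simp add: odefs algebra_simps)

lemma ralt: "omul (omul y a) a = omul y (omul a a)"
  unfolding vec8_eq by (simp add: odefs algebra_simps)

lemma skew: "inner (omul a y) z + inner y (omul a z) = 2 * a$1 * inner y z"
  unfolding inner8 by (simp add: odefs algebra_simps)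

lemma normmul2: "inner (omul a b) (omul a b) = inner a a * inner b b"
  unfolding inner8 by (simp add: odefs algebra_simps)

lemma prodsym: "omul a b + omul b a = (2*a$1) *\<^sub>R b + (2*b$1) *\<^sub>R a - (2 * inner a b) *\<^sub>R e1"
  unfolding vec8_eq inner8 by (simp add: odefs e1c algebra_simps)

lemma e1_left[simp]: "omul e1 y = y"
  unfolding vec8_eq by (simp add: odefs e1c)
lemma e1_right[simp]: "omul y e1 = y"
  unfolding vec8_eq by (simp add: odefs e1c)

lemma om_add1: "omul (a + b) y = omul a y + omul b y"
  unfolding vec8_eq by (simp add: odefs algebra_simps)
lemma om_add2: "omul y (a + b) = omul y a + omul y b"
  unfolding vec8_eq by (simp add: odefs algebra_simps)
lemma om_scale1: "omul (r *\<^sub>R a) y = r *\<^sub>R omul a y"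
  unfolding vec8_eq by (simp add: odefs algebra_simps)
lemma om_scale2: "omul y (r *\<^sub>R a) = r *\<^sub>R omul y a"
  unfolding vec8_eq by (simp add: odefs algebra_simps)

lemma lin1: "linear (\<lambda>a. omul a y)"
  by (rule linearI) (simp_all add: om_add1 om_scale1)
lemma lin2: "linear (\<lambda>y. omul a y)"
  by (rule linearI) (simp_all add: om_add2 om_scale2)

lemma om_neg1: "omul (- a) y = - omul a y"
  using linear_neg[OF lin1] by auto
lemma om_neg2: "omul y (- a) = - omul y a"
  using linear_neg[OF lin2] by auto
lemma om_diff1: "omul (a - b) y = omul a y - omul b y"
  using linear_diff[OF lin1] by auto
lemma om_diff2: "omul y (a - b) = omul y a - omul y b"
  using linear_diff[OF lin2] by auto
lemma om_zero1[simp]: "omul 0 y = 0"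
  using linear_0[OF lin1] by auto
lemma om_zero2[simp]: "omul y 0 = 0"
  using linear_0[OF lin2] by auto

lemmas omlin = om_add1 om_add2 om_scale1 om_scale2 om_neg1 om_neg2 om_diff1 om_diff2

lemma inner_e1: "inner a e1 = a$1" "inner e1 a = a$1"
  by (simp_all add: inner_axis inner_axis')

lemma acp: assumes "a$1 = 0" "b$1 = 0" "inner a b = 0"
  shows "omul a b = - omul b a"
  using prodsym[of a b] assms by (simp add: eq_neg_iff_add_eq_0)

lemma ac: assumes "a$1 = 0" "b$1 = 0" "inner a b = 0"
  shows "omul a (omul b y) = - omul b (omul a y)"
proof -
  have "omul a b + omul b a = 0" using prodsym[of a b] assms by simp
  then have "omul a (omul b y) + omul b (omul a y) = 0" using lalt[of a b y] by simp
  then show ?thesis by (simp add: eq_neg_iff_add_eq_0)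
qed

lemma sqr: assumes "a$1 = 0" "inner a a = 1" shows "omul a a = - e1"
proof -
  have "2 *\<^sub>R omul a a = 2 *\<^sub>R (- e1)" using prodsym[of a a] assms by (simp add: scaleR_2[symmetric])
  then show ?thesis by (metis scaleR_cancel_left zero_neq_numeral)
qed

lemma sq: assumes "a$1 = 0" "inner a a = 1" shows "omul a (omul a y) = - y"
proof -
  have "2 *\<^sub>R omul a (omul a y) = omul (2 *\<^sub>R omul a a) y" using lalt[of a a y] by (simp add: scaleR_2)
  also have "\<dots> = - 2 *\<^sub>R y" using sqr[OF assms] by (simp add: omlin)
  finally have "2 *\<^sub>R omul a (omul a y) = 2 *\<^sub>R (- y)" by simp
  then show ?thesis by (metis scaleR_cancel_left zero_neq_numeral)
qed

lemma sq_right: assumes "a$1 = 0" "inner a a = 1" shows "omul (omul y a) a = - y"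
  using ralt[of y a] sqr[OF assms] by (simp add: omlin)

lemma skewI: assumes "a$1 = 0" shows "inner (omul a y) z = - inner y (omul a z)"
  using skew[of a y z] assms by simp

lemma normI: assumes "a$1 = 0" "inner a a = 1" shows "inner (omul a y) (omul a y) = inner y y"
  using normmul2[of a y] assms by simp

lemma normmul: "norm (omul a b) = norm a * norm b"
  by (simp add: norm_eq_sqrt_inner normmul2 real_sqrt_mult)

lemma orth_self: assumes "a$1 = 0" shows "inner (omul a y) y = 0"
  using skewI[OF assms, of y y] by (simp add: inner_commute)


definition Jm :: "real^8 \<Rightarrow> real^8 \<Rightarrow> real^8 \<Rightarrow> real^8" where
  "Jm u w y = omul u (omul w y)"
definition Bm :: "real^8 \<Rightarrow> real^8 \<Rightarrow> real \<Rightarrow> real \<Rightarrow> real^8 \<Rightarrow> real^8" where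
  "Bm u w c s y = c *\<^sub>R y + s *\<^sub>R Jm u w y"
definition Am :: "real^8 \<Rightarrow> real^8 \<Rightarrow> real \<Rightarrow> real \<Rightarrow> real^8 \<Rightarrow> real^8" where
  "Am u w c s x = x + ((c^2 - s^2) - 1) *\<^sub>R (inner u x *\<^sub>R u + inner w x *\<^sub>R w)
      + (2*c* s) *\<^sub>R (inner u x *\<^sub>R w - inner w x *\<^sub>R u)"
definition ON :: "real^8 \<Rightarrow> real^8 \<Rightarrow> bool" where
  "ON u w \<longleftrightarrow> u$1 = 0 \<and> w$1 = 0 \<and> inner u u = 1 \<and> inner w w = 1 \<and> inner u w = 0"

lemma J_lin: "linear (Jm u w)"
proof -
  have "linear ((\<lambda>z. omul u z) \<circ> (\<lambda>y. omul w y))" by (intro linear_compose lin2)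
  moreover have "Jm u w = (\<lambda>z. omul u z) \<circ> (\<lambda>y. omul w y)" by (rule ext) (simp add: Jm_def)
  ultimately show ?thesis by simp
qed

lemma J_add: "Jm u w (a + b) = Jm u w a + Jm u w b" using linear_add[OF J_lin] .
lemma J_scale: "Jm u w (r *\<^sub>R a) = r *\<^sub>R Jm u w a" using linear_scale[OF J_lin] .
lemma J_neg: "Jm u w (- a) = - Jm u w a" using linear_neg[OF J_lin] .
lemma J_diff: "Jm u w (a - b) = Jm u w a - Jm u w b" using linear_diff[OF J_lin] .
lemmas Jlin = J_add J_scale J_neg J_diff

lemma JJ: assumes "ON u w" shows "Jm u w (Jm u w y) = - y"
proof -
  have h: "u$1 = 0" "w$1 = 0" "inner u u = 1" "inner w w = 1" "inner w u = 0"
    using assms by (auto simp: ON_def inner_commute)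
  have "Jm u w (Jm u w y) = omul u (omul w (omul u (omul w y)))" by (simp add: Jm_def)
  also have "\<dots> = omul u (- omul u (omul w (omul w y)))" using ac[OF h(2,1,5)] by simp
  also have "\<dots> = omul w (omul w y)" using sq[OF h(1,3)] by (simp add: omlin)
  also have "\<dots> = - y" using sq[OF h(2,4)] .
  finally show ?thesis .
qed

lemma J_orth: assumes "ON u w" shows "inner y (Jm u w y) = 0"
proof -
  have h: "u$1 = 0" "w$1 = 0" "inner u w = 0" using assms by (auto simp: ON_def)
  have 1: "inner y (Jm u w y) = - inner (omul u y) (omul w y)"
    using skewI[OF h(1), of y "omul w y"] by (simp add: Jm_def)
  have "Jm u w y = - omul w (omul u y)" using ac[OF h] by (simp add: Jm_def)
  then have 2: "inner y (Jm u w y) = inner (omul w y) (omul u y)"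
    using skewI[OF h(2), of y "omul u y"] by (simp add: inner_minus_right)
  from 1 2 show ?thesis by (simp add: inner_commute)
qed

lemma J_norm: assumes "ON u w" shows "inner (Jm u w y) (Jm u w y) = inner y y"
  using assms by (simp add: ON_def Jm_def normI)

lemma B_lin: "linear (Bm u w c s)"
  by (rule linearI) (simp_all add: Bm_def Jlin algebra_simps)

lemma B_inner: assumes "ON u w" "c^2 + s^2 = 1" shows "inner (Bm u w c s y) (Bm u w c s y) = inner y y"
proof -
  have "inner (Bm u w c s y) (Bm u w c s y) = c^2 * inner y y + 2*c* s* inner y (Jm u w y) + s^2 * inner (Jm u w y) (Jm u w y)"
    by (simp add: Bm_def inner_add_left inner_add_right inner_commute power2_eq_square algebra_simps)
  also have "\<dots> = (c^2 + s^2) * inner y y" using J_orth[OF assms(1)] J_norm[OF assms(1)] by (simp add: algebra_simps)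
  finally show ?thesis using assms(2) by simp
qed

lemma B_norm: assumes "ON u w" "c^2 + s^2 = 1" shows "norm (Bm u w c s y) = norm y"
  using B_inner[OF assms] by (simp add: norm_eq_sqrt_inner)

lemma B_ot: assumes "ON u w" "c^2 + s^2 = 1" shows "orthogonal_transformation (Bm u w c s)"
  using B_lin B_norm[OF assms] by (simp add: orthogonal_transformation)

lemma B_sq: assumes "ON u w"
  shows "Bm u w c s (Bm u w c s y) = Bm u w (c^2 - s^2) (2*c* s) y"
proof -
  have "Bm u w c s (Bm u w c s y) = c *\<^sub>R (c *\<^sub>R y + s *\<^sub>R Jm u w y) + s *\<^sub>R (c *\<^sub>R Jm u w y + s *\<^sub>R (- y))"
    using JJ[OF assms, of y] by (simp add: Bm_def Jlin)
  then show ?thesis unfolding Bm_def by (simp add: vec_eq_iff algebra_simps power2_eq_square)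
qed

lemma B_inv: assumes "ON u w" "c^2 + s^2 = 1"
  shows "Bm u w c (-s) (Bm u w c s y) = y"
proof -
  have "Bm u w c (-s) (Bm u w c s y) = (c^2 + s^2) *\<^sub>R y"
    using JJ[OF assms(1), of y] by (simp add: Bm_def Jlin algebra_simps power2_eq_square)
  then show ?thesis using assms(2) by simp
qed

lemma halfangle: assumes "(c::real)^2 + s^2 = 1"
  obtains c' s' where "c'^2 + s'^2 = 1" "c = c'^2 - s'^2" "s = 2*c'* s'"
proof -
  obtain t where t: "c = cos t" "s = sin t" using sincos_total_2pi[OF assms] by metis
  have "cos t = (cos (t/2))^2 - (sin (t/2))^2" using cos_double[of "t/2"] by simp
  moreover have "sin t = 2 * cos (t/2) * sin (t/2)" using sin_double[of "t/2"] by (simp add: mult.commute)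
  ultimately show ?thesis using that[of "cos (t/2)" "sin (t/2)"] t by simp
qed

lemma det_sq: fixes g :: "real^8 \<Rightarrow> real^8"
  assumes "orthogonal_transformation g" shows "det (matrix (g \<circ> g)) = 1"
proof -
  have l: "linear g" using assms orthogonal_transformation_linear by blast
  have "det (matrix (g \<circ> g)) = det (matrix g) * det (matrix g)"
    by (simp add: matrix_compose[OF l l] det_mul)
  also have "\<dots> = \<bar>det (matrix g)\<bar> * \<bar>det (matrix g)\<bar>" by (simp add: abs_mult_self_eq)
  also have "\<dots> = 1" using orthogonal_transformation_det[OF assms] by simp
  finally show ?thesis .
qed

lemma B_det: assumes "ON u w" "c^2 + s^2 = 1" shows "det (matrix (Bm u w c s)) = 1"
proof -
  obtain c' s' where h: "c'^2 + s'^2 = 1" "c = c'^2 - s'^2" "s = 2*c'* s'" using halfangle[OF assms(2)] by metis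
  have "Bm u w c s = Bm u w c' s' \<circ> Bm u w c' s'" using B_sq[OF assms(1)] h by (auto simp: fun_eq_iff)
  then show ?thesis using det_sq[OF B_ot[OF assms(1) h(1)]] by simp
qed

lemma B_SO8: assumes "ON u w" "c^2 + s^2 = 1" shows "Bm u w c s \<in> SO8"
  using B_ot[OF assms] B_det[OF assms] by (simp add: SO8_def)

lemma A_lin: "linear (Am u w c s)"
  by (rule linearI) (simp_all add: Am_def inner_add_right inner_scaleR_right algebra_simps)

lemma Ju: assumes "ON u w" shows "omul u (Jm u w y) = - omul w y"
  using assms by (simp add: ON_def Jm_def sq)
lemma Jw: assumes "ON u w" shows "omul w (Jm u w y) = omul u y"
proof -
  have h: "u$1 = 0" "w$1 = 0" "inner u u = 1" "inner w w = 1" "inner w u = 0"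
    using assms by (auto simp: ON_def inner_commute)
  show ?thesis using ac[OF h(2,1,5), of "omul w y"] sq[OF h(2,4)] by (simp add: Jm_def omlin)
qed
lemma JonU: assumes "ON u w" shows "Jm u w (omul u y) = omul w y"
proof -
  have h: "u$1 = 0" "w$1 = 0" "inner u u = 1" "inner w w = 1" "inner w u = 0"
    using assms by (auto simp: ON_def inner_commute)
  show ?thesis using ac[OF h(2,1,5), of y] sq[OF h(1,3)] by (simp add: Jm_def omlin)
qed
lemma JonW: assumes "ON u w" shows "Jm u w (omul w y) = - omul u y"
  using assms by (simp add: ON_def Jm_def sq omlin)
lemma JonR: assumes "ON u w" "r$1 = 0" "inner u r = 0" "inner w r = 0"
  shows "Jm u w (omul r y) = omul r (Jm u w y)"
proof -
  have h: "u$1 = 0" "w$1 = 0" using assms by (auto simp: ON_def)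
  have "Jm u w (omul r y) = omul u (- omul r (omul w y))" using ac[OF h(2) assms(2,4)] by (simp add: Jm_def)
  also have "\<dots> = omul r (omul u (omul w y))" using ac[OF h(1) assms(2,3)] by (simp add: omlin)
  finally show ?thesis by (simp add: Jm_def)
qed

lemma scal1: assumes "c^2 + s^2 = (1::real)" shows "(c^2 - s^2)*c + (2*c* s)* s = c"
proof - have "(c^2 - s^2)*c + (2*c* s)* s = c * (c^2+s^2)" by (simp add: algebra_simps power2_eq_square)
  then show ?thesis using assms by simp qed
lemma scal2: assumes "c^2 + s^2 = (1::real)" shows "(2*c* s)*c - (c^2 - s^2)* s = s"
proof - have "(2*c* s)*c - (c^2 - s^2)* s = s * (c^2+s^2)" by (simp add: algebra_simps power2_eq_square)
  then show ?thesis using assms by simp qed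

lemma ident: assumes "ON u w" "c^2 + s^2 = 1"
  shows "omul (Am u w c s x) (Bm u w c s y) = Bm u w c s (omul x y)"
proof -
  have h: "u$1 = 0" "w$1 = 0" "inner u u = 1" "inner w w = 1" "inner u w = 0" "inner w u = 0"
    using assms by (auto simp: ON_def inner_commute)
  define C where "C = c^2 - s^2"
  define S where "S = 2*c* s"
  define \<alpha> where "\<alpha> = inner u x"
  define \<beta> where "\<beta> = inner w x"
  define r where "r = x - x$1 *\<^sub>R e1 - \<alpha> *\<^sub>R u - \<beta> *\<^sub>R w"
  have xdec: "x = x$1 *\<^sub>R e1 + \<alpha> *\<^sub>R u + \<beta> *\<^sub>R w + r" by (simp add: r_def)
  have r1: "r$1 = 0" using h by (simp add: r_def axis_def)
  have ru: "inner u r = 0" using h by (simp add: r_def \<alpha>_def inner_diff_right inner_e1)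
  have rw: "inner w r = 0" using h by (simp add: r_def \<beta>_def inner_diff_right inner_e1)
  have Ae1: "Am u w c s e1 = e1" using h by (simp add: Am_def inner_e1)
  have Au: "Am u w c s u = C *\<^sub>R u + S *\<^sub>R w" using h by (simp add: Am_def C_def S_def algebra_simps)
  have Aw: "Am u w c s w = C *\<^sub>R w - S *\<^sub>R u" using h by (simp add: Am_def C_def S_def algebra_simps)
  have Ar: "Am u w c s r = r" using ru rw by (simp add: Am_def)
  have Ax: "Am u w c s x = x$1 *\<^sub>R e1 + \<alpha> *\<^sub>R (C *\<^sub>R u + S *\<^sub>R w) + \<beta> *\<^sub>R (C *\<^sub>R w - S *\<^sub>R u) + r"
  proof -
    have "Am u w c s x = Am u w c s (x$1 *\<^sub>R e1 + \<alpha> *\<^sub>R u + \<beta> *\<^sub>R w + r)" using xdec by simp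
    also have "\<dots> = x$1 *\<^sub>R Am u w c s e1 + \<alpha> *\<^sub>R Am u w c s u + \<beta> *\<^sub>R Am u w c s w + Am u w c s r"
      by (simp only: linear_add[OF A_lin] linear_scale[OF A_lin])
    finally show ?thesis using Ae1 Au Aw Ar by simp
  qed
  have Bu: "omul u (Bm u w c s y) = c *\<^sub>R omul u y - s *\<^sub>R omul w y"
    using Ju[OF assms(1)] by (simp add: Bm_def omlin)
  have Bw: "omul w (Bm u w c s y) = c *\<^sub>R omul w y + s *\<^sub>R omul u y"
    using Jw[OF assms(1)] by (simp add: Bm_def omlin)
  have Br: "omul r (Bm u w c s y) = Bm u w c s (omul r y)"
    using JonR[OF assms(1) r1 ru rw] by (simp add: Bm_def omlin)
  have BU: "Bm u w c s (omul u y) = c *\<^sub>R omul u y + s *\<^sub>R omul w y"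
    using JonU[OF assms(1)] by (simp add: Bm_def)
  have BW: "Bm u w c s (omul w y) = c *\<^sub>R omul w y - s *\<^sub>R omul u y"
    using JonW[OF assms(1)] by (simp add: Bm_def)
  have s1: "C*c + S* s = c" using scal1[OF assms(2)] by (simp add: C_def S_def)
  have s2: "S*c - C* s = s" using scal2[OF assms(2)] by (simp add: C_def S_def)
  have "omul (Am u w c s x) (Bm u w c s y) = x$1 *\<^sub>R Bm u w c s y
      + \<alpha> *\<^sub>R (C *\<^sub>R omul u (Bm u w c s y) + S *\<^sub>R omul w (Bm u w c s y))
      + \<beta> *\<^sub>R (C *\<^sub>R omul w (Bm u w c s y) - S *\<^sub>R omul u (Bm u w c s y)) + omul r (Bm u w c s y)"
    by (simp add: Ax omlin)
  also have "\<dots> = x$1 *\<^sub>R Bm u w c s y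
      + \<alpha> *\<^sub>R ((C*c + S* s) *\<^sub>R omul u y + (S*c - C* s) *\<^sub>R omul w y)
      + \<beta> *\<^sub>R ((C*c + S* s) *\<^sub>R omul w y - (S*c - C* s) *\<^sub>R omul u y) + Bm u w c s (omul r y)"
    by (simp add: Bu Bw Br algebra_simps)
  also have "\<dots> = x$1 *\<^sub>R Bm u w c s y + \<alpha> *\<^sub>R Bm u w c s (omul u y) + \<beta> *\<^sub>R Bm u w c s (omul w y)
      + Bm u w c s (omul r y)"
    by (simp add: s1 s2 BU BW)
  also have "\<dots> = Bm u w c s (omul x y)"
  proof -
    have "omul x y = x$1 *\<^sub>R y + \<alpha> *\<^sub>R omul u y + \<beta> *\<^sub>R omul w y + omul r y"
      by (subst xdec) (simp only: om_add1 om_scale1 e1_left)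
    then show ?thesis by (simp only: linear_add[OF B_lin] linear_scale[OF B_lin])
  qed
  finally show ?thesis .
qed


lemma A_norm: assumes "ON u w" "c^2 + s^2 = 1" shows "norm (Am u w c s x) = norm x"
proof -
  have "omul (Am u w c s x) (Bm u w c s e1) = Bm u w c s x" using ident[OF assms, of x e1] by simp
  then have "norm (Am u w c s x) * norm (Bm u w c s e1) = norm (Bm u w c s x)" by (metis normmul)
  then show ?thesis using B_norm[OF assms] by simp
qed

lemma A_det: assumes "ON u w" "c^2 + s^2 = 1" shows "det (matrix (Am u w c s)) = 1"
proof -
  obtain c' s' where h: "c'^2 + s'^2 = 1" "c = c'^2 - s'^2" "s = 2*c'* s'" using halfangle[OF assms(2)] by metis
  have "Am u w c s x = Am u w c' s' (Am u w c' s' x)" for x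
  proof -
    let ?a = "Am u w c s x" and ?b = "Am u w c' s' (Am u w c' s' x)"
    have Be: "Bm u w c s e1 = Bm u w c' s' (Bm u w c' s' e1)" using B_sq[OF assms(1)] h by simp
    have 1: "omul ?a (Bm u w c s e1) = Bm u w c s x" using ident[OF assms, of x e1] by simp
    have "omul ?b (Bm u w c s e1) = Bm u w c' s' (omul (Am u w c' s' x) (Bm u w c' s' e1))"
      using Be ident[OF assms(1) h(1)] by simp
    also have "\<dots> = Bm u w c' s' (Bm u w c' s' x)" using ident[OF assms(1) h(1), of x e1] by simp
    also have "\<dots> = Bm u w c s x" using B_sq[OF assms(1)] h by simp
    finally have "omul (?a - ?b) (Bm u w c s e1) = 0" using 1 by (simp add: om_diff1)
    then have "norm (?a - ?b) * norm (Bm u w c s e1) = 0" by (metis normmul norm_zero)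
    then show ?thesis using B_norm[OF assms] by simp
  qed
  then have "Am u w c s = Am u w c' s' \<circ> Am u w c' s'" by (auto simp: fun_eq_iff)
  moreover have "orthogonal_transformation (Am u w c' s')"
    using A_lin A_norm[OF assms(1) h(1)] by (simp add: orthogonal_transformation)
  ultimately show ?thesis using det_sq by simp
qed

lemma spin_mem: assumes "ON u w" "c^2 + s^2 = 1"
  shows "(Am u w c s, Bm u w c s, Bm u w c s) \<in> Spin7"
proof -
  have "Am u w c s \<in> SO8"
    using A_lin A_norm[OF assms] A_det[OF assms] by (simp add: SO8_def orthogonal_transformation)
  then show ?thesis using B_SO8[OF assms] ident[OF assms] by (simp add: Spin7_def Spin8_def)
qed

lemma TS7_B: assumes "ON u w" "c^2 + s^2 = 1" "(p,v) \<in> TS7"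
  shows "(Bm u w c s p, Bm u w c s v) \<in> TS7"
  using assms(3) B_norm[OF assms(1,2)] B_ot[OF assms(1,2)]
  by (simp add: TS7_def S7_def orthogonal_transformation_def)

lemma invB: assumes "spin7_invariant F" "ON u w" "c^2 + s^2 = 1" "(p,v) \<in> TS7"
  shows "F (Bm u w c s p) (Bm u w c s v) = F p v"
  using assms spin_mem[OF assms(2,3)] unfolding spin7_invariant_def spin7_act_def by fastforce

lemma ex_orth4: fixes a b c d :: "real^8"
  obtains z where "norm z = 1" "inner z a = 0" "inner z b = 0" "inner z c = 0" "inner z d = 0"
proof -
  have "card {a,b,c,d} \<le> 4" by (auto simp: card_insert_if)
  then have "dim {a,b,c,d} < DIM(real^8)" using dim_le_card'[of "{a,b,c,d}"] by simp
  then obtain x where x: "x \<noteq> 0" "\<And>y. y \<in> span {a,b,c,d} \<Longrightarrow> orthogonal x y"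
    using orthogonal_to_subspace_exists by blast
  have "orthogonal x a" "orthogonal x b" "orthogonal x c" "orthogonal x d" using x(2)[OF span_base] by auto
  then show ?thesis using that[of "x /\<^sub>R norm x"] x(1) by (simp add: orthogonal_def)
qed

lemma ninner: "norm (x::real^8) = 1 \<Longrightarrow> inner x x = 1"
  by (simp add: norm_eq_sqrt_inner)



abbreviation e2 :: "real^8" where "e2 \<equiv> axis 2 1"

lemma claim1: assumes inv: "spin7_invariant F" and v1: "v$1 = 0" and vn: "norm v = 1"
  shows "F e1 v = F e1 e2"
proof -
  define a where "a = v$2"
  have vv: "inner v v = 1" using vn by (rule ninner)
  have a1: "\<bar>a\<bar> \<le> 1" using component_le_norm_cart[of v 2] vn by (simp add: a_def)
  define r where "r = e2 - a *\<^sub>R v"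
  have e2v: "inner e2 v = a" by (simp add: a_def inner_axis')
  have rr: "inner r r = 1 - a^2"
  proof -
    have "inner r r = inner e2 e2 - 2 * a * inner e2 v + a^2 * inner v v"
      by (simp add: r_def inner_diff_left inner_diff_right inner_commute[of v e2] power2_eq_square algebra_simps)
    also have "inner e2 e2 = 1" by (simp add: inner_axis)
    finally show ?thesis using e2v vv by (simp add: power2_eq_square)
  qed
  obtain w where wn: "norm w = 1" and w1: "w$1 = 0" and wv: "inner w v = 0"
      and we: "e2 = a *\<^sub>R v + sqrt (1 - a^2) *\<^sub>R w"
  proof (cases "r = 0")
    case True
    then have "e2 = a *\<^sub>R v" by (simp add: r_def)
    then have "1 = \<bar>a\<bar>" using vn by (metis norm_axis_1 norm_scaleR mult.right_neutral)
    then have "a^2 = 1" by (metis power2_abs power_one)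
    then have "1 - a^2 = 0" by simp
    moreover obtain z where "norm z = 1" "inner z e1 = 0" "inner z v = 0"
      using ex_orth4[of e1 v v v] by metis
    ultimately show ?thesis using that[of z] \<open>e2 = a *\<^sub>R v\<close> by (simp add: inner_e1)
  next
    case False
    have nr: "norm r = sqrt (1 - a^2)" using rr by (simp add: norm_eq_sqrt_inner)
    have "norm r > 0" using False by simp
    show ?thesis
    proof (rule that[of "r /\<^sub>R norm r"])
      show "norm (r /\<^sub>R norm r) = 1" using False by simp
      show "(r /\<^sub>R norm r) $ 1 = 0" using v1 by (simp add: r_def axis_def)
      show "inner (r /\<^sub>R norm r) v = 0" by (simp add: r_def inner_diff_left e2v vv)
      show "e2 = a *\<^sub>R v + sqrt (1 - a^2) *\<^sub>R (r /\<^sub>R norm r)"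
        using \<open>norm r > 0\<close> by (simp add: nr[symmetric] r_def)
    qed
  qed
  have ww: "inner w w = 1" using wn by (rule ninner)
  have ON1: "ON v w" using v1 w1 vv ww wv by (simp add: ON_def inner_commute)
  define c where "c = sqrt ((1 + a)/2)"
  define s where "s = sqrt ((1 - a)/2)"
  have c2: "c^2 = (1+a)/2" using a1 by (simp add: c_def)
  have s2: "s^2 = (1-a)/2" using a1 by (simp add: s_def)
  have cs1: "c^2 + s^2 = 1" using c2 s2 by simp
  have cs1': "c^2 + (-s)^2 = 1" using cs1 by simp
  have csa: "c^2 - s^2 = a" using c2 s2 by simp
  have cs2: "2*c* s = sqrt (1 - a^2)"
  proof -
    have "2*c* s = sqrt 4 * sqrt ((1+a)/2) * sqrt ((1-a)/2)" by (simp add: c_def s_def)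
    also have "\<dots> = sqrt (4 * ((1+a)/2) * ((1-a)/2))" by (simp only: real_sqrt_mult)
    also have "4 * ((1+a)/2) * ((1-a)/2) = 1 - a^2" by (simp add: field_simps power2_eq_square)
    finally show ?thesis .
  qed
  define q where "q = omul v w"
  have q1: "q$1 = 0"
  proof -
    have "q$1 = inner (omul v w) e1" by (simp add: q_def inner_e1)
    also have "\<dots> = - inner w v" using skewI[OF v1, of w e1] by simp
    finally show ?thesis using wv by simp
  qed
  have qq: "inner q q = 1" using normI[OF v1 vv] ww by (simp add: q_def)
  obtain z where zn: "norm z = 1" and ze: "inner z e1 = 0" and zv: "inner z v = 0"
    and zw: "inner z w = 0" and zq: "inner z q = 0"
    using ex_orth4[of e1 v w q] by metis
  have z1: "z$1 = 0" using ze by (simp add: inner_e1)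
  have zz: "inner z z = 1" using zn by (rule ninner)
  define u' where "u' = - omul q z"
  have u1: "u'$1 = 0"
  proof -
    have "(omul q z)$1 = inner (omul q z) e1" by (simp add: inner_e1)
    also have "\<dots> = - inner z q" using skewI[OF q1, of z e1] by simp
    finally show ?thesis using zq by (simp add: u'_def)
  qed
  have uu: "inner u' u' = 1" using normI[OF q1 qq] zz by (simp add: u'_def)
  have uz: "inner u' z = 0" using orth_self[OF q1, of z] by (simp add: u'_def)
  have ON2: "ON u' z" using u1 z1 uu zz uz by (simp add: ON_def)
  have qv: "omul q v = w"
  proof -
    have "omul q v = omul (- omul w v) v" using acp[of v w] v1 w1 wv by (simp add: q_def inner_commute)
    then show ?thesis using sq_right[OF v1 vv] by (simp add: om_neg1)
  qed
  have qw: "omul q w = - v" using sq_right[OF w1 ww] by (simp add: q_def)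
  have vu: "inner u' v = 0"
  proof -
    have "inner u' v = inner z (omul q v)" using skewI[OF q1, of z v] by (simp add: u'_def)
    then show ?thesis using qv zw by simp
  qed
  have wu: "inner u' w = 0"
  proof -
    have "inner u' w = inner z (omul q w)" using skewI[OF q1, of z w] by (simp add: u'_def)
    then show ?thesis using qw zv by simp
  qed
  have Jv: "Jm u' z (omul v y) = omul v (Jm u' z y)" for y
    using JonR[OF ON2 v1 vu] zv by (simp add: inner_commute)
  have Jw': "Jm u' z (omul w y) = omul w (Jm u' z y)" for y
    using JonR[OF ON2 w1 wu] zw by (simp add: inner_commute)
  define B where "B = Bm v w c s"
  define B' where "B' = Bm u' z c (-s)"
  have Be1: "B e1 = c *\<^sub>R e1 + s *\<^sub>R q" by (simp add: B_def Bm_def Jm_def q_def)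
  have Bv: "B v = c *\<^sub>R v + s *\<^sub>R w"
  proof -
    have "omul w v = - q" using acp[of w v] v1 w1 wv by (simp add: q_def)
    then have "Jm v w v = w" using sq[OF v1 vv] by (simp add: Jm_def q_def om_neg2)
    then show ?thesis by (simp add: B_def Bm_def)
  qed
  have J'e: "Jm u' z e1 = q" using sq_right[OF z1 zz] by (simp add: Jm_def u'_def om_neg1)
  have J'q: "Jm u' z q = - e1" using JJ[OF ON2, of e1] J'e by simp
  have J'v: "Jm u' z v = - w"
  proof -
    have "Jm u' z v = omul v q" using Jv[of e1] J'e by simp
    then show ?thesis using sq[OF v1 vv] by (simp add: q_def)
  qed
  have J'w: "Jm u' z w = v"
  proof -
    have "Jm u' z w = omul w q" using Jw'[of e1] J'e by simp
    also have "q = - omul w v" using acp[of v w] v1 w1 wv by (simp add: q_def inner_commute)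
    finally show ?thesis using sq[OF w1 ww] by (simp add: om_neg2)
  qed
  have BB1: "B' (B e1) = e1"
  proof -
    have "B' (B e1) = (c^2 + s^2) *\<^sub>R e1"
      unfolding Be1 B'_def Bm_def by (simp add: Jlin J'e J'q vec_eq_iff algebra_simps power2_eq_square)
    then show ?thesis using cs1 by simp
  qed
  have BBv: "B' (B v) = e2"
  proof -
    have "B' (B v) = (c^2 - s^2) *\<^sub>R v + (2*c* s) *\<^sub>R w"
      unfolding Bv B'_def Bm_def by (simp add: Jlin J'v J'w vec_eq_iff algebra_simps power2_eq_square)
    then show ?thesis using csa cs2 we by simp
  qed
  have T0: "(e1, v) \<in> TS7" using v1 vn by (simp add: TS7_def S7_def inner_e1)
  have "F e1 v = F (B e1) (B v)" using invB[OF inv ON1 cs1 T0] by (simp add: B_def)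
  also have "\<dots> = F (B' (B e1)) (B' (B v))"
    using invB[OF inv ON2 cs1' TS7_B[OF ON1 cs1 T0]] by (simp add: B_def B'_def)
  also have "\<dots> = F e1 e2" using BB1 BBv by simp
  finally show ?thesis .
qed



lemma axc: "(e2::real^8)$1 = 0" "(axis 3 1::real^8) $ 1 = 0" "(e2::real^8)$3 = 0" "(e1::real^8)$2 = 0"
  by (simp_all add: axis_def)

lemma ON23: "ON e2 (axis 3 1)"
  by (simp add: ON_def inner_axis axc)

lemma claim2: assumes inv: "spin7_invariant F" and pv: "(p,v) \<in> TS7" and vn: "norm v = 1"
  shows "F p v = F e1 e2"
proof -
  have pn: "norm p = 1" and pv0: "inner p v = 0" using pv by (auto simp: TS7_def S7_def)
  have pp: "inner p p = 1" using pn by (rule ninner)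
  define x1 where "x1 = p$1"
  define q' where "q' = p - x1 *\<^sub>R e1"
  have q'1: "q'$1 = 0" by (simp add: q'_def x1_def axis_def)
  have qq': "inner q' q' = 1 - x1^2"
  proof -
    have "inner q' q' = inner p p - 2 * x1 * inner p e1 + x1^2 * inner e1 e1"
      by (simp add: q'_def inner_diff_left inner_diff_right inner_commute[of e1 p] power2_eq_square algebra_simps)
    then show ?thesis using pp by (simp add: inner_e1 x1_def inner_axis power2_eq_square)
  qed
  obtain u w c s where ON1: "ON u w" and cs1: "c^2 + s^2 = 1" and Be: "Bm u w c s e1 = p"
  proof (cases "q' = 0")
    case True
    then have p': "p = x1 *\<^sub>R e1" by (simp add: q'_def)
    then have "x1^2 = 1" using qq' True by simp
    then show ?thesis using that[OF ON23, of x1 0] p' by (simp add: Bm_def)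
  next
    case False
    define q where "q = q' /\<^sub>R norm q'"
    have q1: "q$1 = 0" using q'1 by (simp add: q_def)
    have "norm q = 1" using False by (simp add: q_def)
    then have qq: "inner q q = 1" by (rule ninner)
    obtain w0 where wn: "norm w0 = 1" "inner w0 e1 = 0" "inner w0 q = 0"
      using ex_orth4[of e1 q q q] by metis
    have w1: "w0$1 = 0" using wn by (simp add: inner_e1)
    have ww: "inner w0 w0 = 1" using wn by (simp add: ninner)
    define u where "u = - omul q w0"
    have u1: "u$1 = 0"
    proof -
      have "(omul q w0)$1 = inner (omul q w0) e1" by (simp add: inner_e1)
      also have "\<dots> = - inner w0 q" using skewI[OF q1, of w0 e1] by simp
      finally show ?thesis using wn by (simp add: u_def)
    qed
    have uu: "inner u u = 1" using normI[OF q1 qq] ww by (simp add: u_def)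
    have uw: "inner u w0 = 0" using orth_self[OF q1, of w0] by (simp add: u_def)
    have ON: "ON u w0" using u1 w1 uu ww uw by (simp add: ON_def)
    have s2: "x1^2 + (norm q')^2 = 1" using qq' by (simp add: power2_norm_eq_inner)
    have "omul u w0 = q" using sq_right[OF w1 ww] by (simp add: u_def om_neg1)
    then have "Bm u w0 x1 (norm q') e1 = x1 *\<^sub>R e1 + q'" using False by (simp add: Bm_def Jm_def q_def)
    also have "\<dots> = p" by (simp add: q'_def)
    finally show ?thesis using that[OF ON s2] by simp
  qed
  define v' where "v' = Bm u w c (-s) v"
  have cs1': "c^2 + (-s)^2 = 1" using cs1 by simp
  have Bv': "Bm u w c s v' = v" using B_inv[OF ON1 cs1', of v] by (simp add: v'_def)
  have v'n: "norm v' = 1" using B_norm[OF ON1 cs1'] vn by (simp add: v'_def)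
  have "inner e1 v' = inner (Bm u w c s e1) (Bm u w c s v')"
    using B_ot[OF ON1 cs1] by (simp add: orthogonal_transformation_def)
  then have v'1: "v'$1 = 0" using Be Bv' pv0 by (simp add: inner_e1)
  have T0: "(e1, v') \<in> TS7" using v'1 v'n by (simp add: TS7_def S7_def inner_e1)
  have "F p v = F (Bm u w c s e1) (Bm u w c s v')" using Be Bv' by simp
  also have "\<dots> = F e1 v'" using invB[OF inv ON1 cs1 T0] .
  also have "\<dots> = F e1 e2" using claim1[OF inv v'1 v'n] .
  finally show ?thesis .
qed

theorem mainTheorem5:
  fixes F :: "real^8 \<Rightarrow> real^8 \<Rightarrow> real"
    and X :: triple
  assumes "finsler_S7 F"
    and "spin7_invariant F"
    and "X \<in> Lie_Spin7"
    and "X \<noteq> ((\<lambda>v. 0), (\<lambda>v. 0), (\<lambda>v. 0))"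
    and "killing_const_length F (fundamental_field X)"
  shows "\<exists>c>0. \<forall>(p,v)\<in>TS7. F p v = c * norm v"
proof -
  have pos: "\<forall>(p,v)\<in>TS7_nz. F p v > 0" and hom: "\<forall>(p,v)\<in>TS7. \<forall>r>0. F p (r *\<^sub>R v) = r * F p v"
    using assms(1) unfolding finsler_S7_def by blast+
  have "(e1, e2) \<in> TS7_nz" by (simp add: TS7_nz_def TS7_def S7_def inner_axis axc)
  then have Kpos: "F e1 e2 > 0" using pos by blast
  have "F p v = F e1 e2 * norm v" if pv: "(p,v) \<in> TS7" for p v
  proof (cases "v = 0")
    case True
    have "F p (2 *\<^sub>R v) = 2 * F p v" using hom pv by auto
    then show ?thesis using True by simp
  next
    case False
    define v' where "v' = v /\<^sub>R norm v"
    have pv': "(p, v') \<in> TS7" using pv by (simp add: TS7_def v'_def)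
    have "norm v' = 1" using False by (simp add: v'_def)
    then have 1: "F p v' = F e1 e2" using claim2[OF assms(2) pv'] by simp
    have "F p (norm v *\<^sub>R v') = norm v * F p v'" using hom pv' False by auto
    then show ?thesis using 1 False by (simp add: v'_def)
  qed
  then show ?thesis using Kpos by blast
qed

end
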